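(* For every integer $m\ge 0$, \[ {}_{H}w_{m+1}(x)=w_{m+1}(x)+m\,x\,w_{m}(x)+(1+x)\sum_{k=0}^{m-2}\binom{m}{k}w_{m-k-1}(x)\,w_{k+1}(x) \] (empty sums being $0$). Moreover, for every integer $n\ge 2$, \[ \frac{x}{1+x}\sum_{k=0}^{n}\binom{n}{k}\,{}_{H}w_{k+1}(x)={}_{H}w_{n+1}(x)-{}_{H}w_{n}(x)-w_{n}(x)+w_{n-1}(x). \]
   Context: $\genfrac{\{}{\}}{0pt}{}{n}{k}$ denotes the Stirling numbers of the second kind. The geometric polynomials are $w_n(x)=\sum_{k=0}^{n}\genfrac{\{}{\}}{0pt}{}{n}{k}k!\,x^k$. With $H_k=\sum_{i=1}^k 1/i$, the harmonic geometric polynomials are ${}_{H}w_n(x)=\sum_{k=1}^{n}\genfrac{\{}{\}}{0pt}{}{n}{k}k!\,H_k\,x^k$. *)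

theory Defs
  imports "HOL-Analysis.Analysis" "HOL-Combinatorics.Stirling"
begin

definition geom_poly :: "nat \<Rightarrow> real \<Rightarrow> real" where
  "geom_poly n x = (\<Sum>k=0..n. real (Stirling n k) * fact k * x ^ k)"

definition harm_geom_poly :: "nat \<Rightarrow> real \<Rightarrow> real" where
  "harm_geom_poly n x = (\<Sum>k=1..n. real (Stirling n k) * fact k * harm k * x ^ k)"

end

theory Submission imports Defs "HOL-Computational_Algebra.Formal_Power_Series" begin

lemma pascal_sum:
  fixes f :: "nat \<Rightarrow> 'a::comm_semiring_1"
  shows "(\<Sum>k\<le>Suc n. of_nat (Suc n choose k) * f k) =
         (\<Sum>k\<le>n. of_nat (n choose k) * f k) + (\<Sum>k\<le>n. of_nat (n choose k) * f (Suc k))"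
proof -
  have "(\<Sum>k\<le>Suc n. of_nat (Suc n choose k) * f k) =
        f 0 + (\<Sum>k\<le>n. of_nat (Suc n choose Suc k) * f (Suc k))"
    by (subst sum.atMost_Suc_shift) simp
  also have "\<dots> = f 0 + (\<Sum>k\<le>n. of_nat (n choose Suc k) * f (Suc k)) + (\<Sum>k\<le>n. of_nat (n choose k) * f (Suc k))"
    by (simp add: sum.distrib algebra_simps)
  also have "f 0 + (\<Sum>k\<le>n. of_nat (n choose Suc k) * f (Suc k)) = (\<Sum>k\<le>Suc n. of_nat (n choose k) * f k)"
    by (subst sum.atMost_Suc_shift) simp
  also have "\<dots> = (\<Sum>k\<le>n. of_nat (n choose k) * f k)" by (simp add: binomial_eq_0)
  finally show ?thesis .
qed

lemma stirling_binom: "(\<Sum>k\<le>n. (n choose k) * Stirling k j) = Stirling (Suc n) (Suc j)"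
proof (induction n arbitrary: j)
  case 0
  then show ?case by (cases j) auto
next
  case (Suc n)
  have "(\<Sum>k\<le>Suc n. (Suc n choose k) * Stirling k j) =
     (\<Sum>k\<le>n. (n choose k) * Stirling k j) + (\<Sum>k\<le>n. (n choose k) * Stirling (Suc k) j)"
    using pascal_sum[where f = "\<lambda>k. Stirling k j" and n = n] by simp
  also have "\<dots> = Stirling (Suc (Suc n)) (Suc j)"
  proof (cases j)
    case 0
    have "(\<Sum>k\<le>n. (n choose k) * Stirling k 0) = 1"
      by (simp add: sum.atMost_shift)
    moreover have "(\<Sum>k\<le>n. (n choose k) * Stirling (Suc k) 0) = 0" by simp
    moreover have "Stirling (Suc (Suc n)) (Suc 0) = 1" by (rule Stirling_1)
    ultimately show ?thesis unfolding 0 by linarith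
  next
    case (Suc i)
    have "(\<Sum>k\<le>n. (n choose k) * Stirling (Suc k) j) =
      (\<Sum>k\<le>n. j * ((n choose k) * Stirling k j)) + (\<Sum>k\<le>n. (n choose k) * Stirling k i)"
      by (simp add: Suc sum.distrib algebra_simps)
    also have "\<dots> = j * Stirling (Suc n) (Suc j) + Stirling (Suc n) j"
      using Suc.IH[of j] Suc.IH[of i] by (simp del: Stirling.simps add: sum.distrib sum_distrib_left[symmetric] Suc)
    finally have "(\<Sum>k\<le>n. (n choose k) * Stirling (Suc k) j) = j * Stirling (Suc n) (Suc j) + Stirling (Suc n) j" .
    moreover have "Stirling (Suc (Suc n)) (Suc j) = Suc j * Stirling (Suc n) (Suc j) + Stirling (Suc n) j"
      by (simp only: Stirling.simps)
    ultimately show ?thesis using Suc.IH[of j] by simp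
  qed
  finally show ?case .
qed

definition st :: "(nat \<Rightarrow> real) \<Rightarrow> nat \<Rightarrow> real" where
  "st a n = (\<Sum>j\<le>n. real (Stirling n j) * a j)"

lemma st_Suc: "st b (Suc n) = st (\<lambda>j. real j * b j + b (Suc j)) n"
proof -
  have "st b (Suc n) = (\<Sum>j\<le>n. real (Stirling (Suc n) (Suc j)) * b (Suc j))"
    unfolding st_def by (subst sum.atMost_Suc_shift) simp
  also have "\<dots> = (\<Sum>j\<le>n. real (Suc j) * real (Stirling n (Suc j)) * b (Suc j)) + (\<Sum>j\<le>n. real (Stirling n j) * b (Suc j))"
    by (simp add: sum.distrib algebra_simps)
  also have "(\<Sum>j\<le>n. real (Suc j) * real (Stirling n (Suc j)) * b (Suc j)) = (\<Sum>j\<le>Suc n. real j * real (Stirling n j) * b j)"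
    by (subst sum.atMost_Suc_shift) simp
  also have "\<dots> = (\<Sum>j\<le>n. real j * real (Stirling n j) * b j)" by simp
  finally show ?thesis unfolding st_def by (simp add: sum.distrib algebra_simps)
qed

lemma st_binom: "(\<Sum>k\<le>n. real (n choose k) * st a k) = st (\<lambda>j. a j + real j * a (j - 1)) n"
proof -
  define b where "b j = (if j = 0 then 0 else a (j - 1))" for j
  have "(\<Sum>k\<le>n. real (n choose k) * st a k) = (\<Sum>k\<le>n. \<Sum>j\<le>n. real (n choose k) * real (Stirling k j) * a j)"
    unfolding st_def sum_distrib_left
  proof (rule sum.cong[OF refl])
    fix k assume "k \<in> {..n}"
    then show "(\<Sum>j\<le>k. real (n choose k) * (real (Stirling k j) * a j)) = (\<Sum>j\<le>n. real (n choose k) * real (Stirling k j) * a j)"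
      unfolding mult.assoc by (intro sum.mono_neutral_left) auto
  qed
  also have "\<dots> = (\<Sum>j\<le>n. real (\<Sum>k\<le>n. (n choose k) * Stirling k j) * a j)"
    by (subst sum.swap) (simp add: sum_distrib_right)
  also have "\<dots> = (\<Sum>j\<le>n. real (Stirling (Suc n) (Suc j)) * b (Suc j))"
    by (simp add: stirling_binom b_def)
  also have "\<dots> = st b (Suc n)"
    unfolding st_def by (subst sum.atMost_Suc_shift) (simp add: b_def)
  also have "\<dots> = st (\<lambda>j. a j + real j * a (j - 1)) n"
    by (subst st_Suc) (auto simp: st_def b_def algebra_simps intro!: sum.cong)
  finally show ?thesis .
qed

lemma st_comb:
  assumes "\<And>j. c * f j = d * g j - h j"
  shows "c * st f n = d * st g n - st h n"
proof -
  have "(\<Sum>j\<le>n. real (Stirling n j) * (c * f j)) = (\<Sum>j\<le>n. real (Stirling n j) * (d * g j - h j))"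
    using assms by simp
  then show ?thesis unfolding st_def
    by (simp add: sum_distrib_left sum_subtractf algebra_simps)
qed

lemma st_delta: "st (\<lambda>j. if j = 0 then 1 else 0) n = (if n = 0 then 1 else 0)"
proof -
  have "st (\<lambda>j. if j = 0 then 1 else 0) n = real (Stirling n 0)"
    unfolding st_def by (subst sum.atMost_shift) simp
  then show ?thesis by (cases n) auto
qed

definition aw :: "real \<Rightarrow> nat \<Rightarrow> real" where "aw x j = fact j * x ^ j"
definition ah :: "real \<Rightarrow> nat \<Rightarrow> real" where "ah x j = fact j * harm j * x ^ j"
definition al :: "real \<Rightarrow> nat \<Rightarrow> real" where "al x j = (if j = 0 then 0 else fact (j - 1) * x ^ j)"
definition lp :: "nat \<Rightarrow> real \<Rightarrow> real" where "lp n x = st (al x) n"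

lemma w_st: "geom_poly n x = st (aw x) n"
  unfolding geom_poly_def st_def aw_def by (simp add: atLeast0AtMost mult.assoc)

lemma hw_st: "harm_geom_poly n x = st (ah x) n"
proof -
  have "harm_geom_poly n x = (\<Sum>k\<in>{0..n}. real (Stirling n k) * fact k * harm k * x ^ k)"
    unfolding harm_geom_poly_def by (rule sum.mono_neutral_left) (auto simp: harm_def)
  then show ?thesis unfolding st_def ah_def by (simp add: atLeast0AtMost mult.assoc)
qed

lemma Lw: "x * (\<Sum>k\<le>n. real (n choose k) * geom_poly k x) = (1 + x) * geom_poly n x - (if n = 0 then 1 else 0)"
proof -
  have "x * st (\<lambda>j. aw x j + real j * aw x (j - 1)) n = (1 + x) * st (aw x) n - st (\<lambda>j. if j = 0 then 1 else 0) n"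
  proof (rule st_comb)
    fix j show "x * (aw x j + real j * aw x (j - 1)) = (1 + x) * aw x j - (if j = 0 then 1 else 0)"
      by (cases j) (auto simp: aw_def algebra_simps)
  qed
  then show ?thesis by (simp add: w_st st_binom st_delta)
qed

lemma LH: "x * (\<Sum>k\<le>n. real (n choose k) * harm_geom_poly k x) = (1 + x) * harm_geom_poly n x - lp n x"
proof -
  have "x * st (\<lambda>j. ah x j + real j * ah x (j - 1)) n = (1 + x) * st (ah x) n - st (al x) n"
  proof (rule st_comb)
    fix j show "x * (ah x j + real j * ah x (j - 1)) = (1 + x) * ah x j - al x j"
    proof (cases j)
      case (Suc i)
      have "fact (Suc i) * harm (Suc i) = fact (Suc i) * (harm i :: real) + fact i"
        by (simp add: harm_Suc field_simps)
      then show ?thesis using Suc by (simp add: ah_def al_def algebra_simps)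
    qed (simp add: ah_def al_def harm_def)
  qed
  then show ?thesis by (simp add: hw_st lp_def st_binom)
qed

lemma LB: "lp (Suc n) x = (1 + x) * geom_poly n x - (if n = 0 then 1 else 0)"
proof -
  have "1 * st (\<lambda>j. real j * al x j + al x (Suc j)) n = (1 + x) * st (aw x) n - st (\<lambda>j. if j = 0 then 1 else 0) n"
  proof (rule st_comb)
    fix j show "1 * (real j * al x j + al x (Suc j)) = (1 + x) * aw x j - (if j = 0 then 1 else 0)"
      by (cases j) (auto simp: aw_def al_def algebra_simps)
  qed
  then show ?thesis by (simp add: w_st lp_def st_delta st_Suc)
qed

lemma lp0: "lp 0 x = 0" by (simp add: lp_def st_def al_def)

unbundle no vec_syntax
notation fps_nth (infixl \<open>$\<close> 75)

lemma mult_exp_nth: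
  "(Abs_fps (\<lambda>n. a n / fact n) * fps_exp (1::real)) $ n = (\<Sum>i\<le>n. real (n choose i) * a i) / fact n"
proof -
  have "(Abs_fps (\<lambda>n. a n / fact n) * fps_exp (1::real)) $ n = (\<Sum>i\<le>n. a i / fact i * (1 / fact (n - i)))"
    by (simp add: fps_mult_nth atLeast0AtMost)
  also have "\<dots> = (\<Sum>i\<le>n. real (n choose i) * a i / fact n)"
    by (intro sum.cong refl) (simp add: binomial_fact field_simps)
  finally show ?thesis by (simp add: sum_divide_distrib)
qed

lemma fps_identity:
  fixes x :: real
  defines "W \<equiv> Abs_fps (\<lambda>n. geom_poly n x / fact n)"
    and "G \<equiv> Abs_fps (\<lambda>n. harm_geom_poly n x / fact n)"
    and "V \<equiv> Abs_fps (\<lambda>n. if n = 0 then 0 else geom_poly (n - 1) x / fact n)"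
  shows "fps_deriv G = fps_deriv W + fps_const (1 + x) * (fps_deriv W * V) - fps_X * fps_deriv W"
proof -
  define L where "L = Abs_fps (\<lambda>n. lp n x / fact n)"
  define E where "E = fps_exp (1::real)"
  define U where "U = fps_const x * (E - 1)"
  have oneU: "1 - U = fps_const (1 + x) - fps_const x * E"
    unfolding U_def by (simp add: algebra_simps flip: fps_const_add)
  have F1: "W * (1 - U) = 1"
  proof (rule fps_ext)
    fix n
    have "(W * (1 - U)) $ n = (1 + x) * (geom_poly n x / fact n) - x * ((\<Sum>i\<le>n. real (n choose i) * geom_poly i x) / fact n)"
    proof -
      have "W * (1 - U) = fps_const (1 + x) * W - fps_const x * (W * E)"
        unfolding oneU by (simp add: algebra_simps)
      then show ?thesis unfolding W_def E_def by (simp add: mult_exp_nth)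
    qed
    also have "\<dots> = ((1 + x) * geom_poly n x - x * (\<Sum>i\<le>n. real (n choose i) * geom_poly i x)) / fact n"
      by (simp add: field_simps)
    also have "\<dots> = (1::real fps) $ n" by (subst Lw) simp
    finally show "(W * (1 - U)) $ n = (1::real fps) $ n" .
  qed
  have F2: "G * (1 - U) = L"
  proof (rule fps_ext)
    fix n
    have "(G * (1 - U)) $ n = (1 + x) * (harm_geom_poly n x / fact n) - x * ((\<Sum>i\<le>n. real (n choose i) * harm_geom_poly i x) / fact n)"
    proof -
      have "G * (1 - U) = fps_const (1 + x) * G - fps_const x * (G * E)"
        unfolding oneU by (simp add: algebra_simps)
      then show ?thesis unfolding G_def E_def by (simp add: mult_exp_nth)
    qed
    also have "\<dots> = ((1 + x) * harm_geom_poly n x - x * (\<Sum>i\<le>n. real (n choose i) * harm_geom_poly i x)) / fact n"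
      by (simp add: field_simps)
    also have "\<dots> = L $ n" by (subst LH) (simp add: L_def)
    finally show "(G * (1 - U)) $ n = L $ n" .
  qed
  have F3: "fps_deriv L = fps_const (1 + x) * W - 1"
  proof (rule fps_ext)
    fix n
    have "fps_deriv L $ n = lp (Suc n) x / fact n"
      by (simp add: L_def field_simps del: of_nat_Suc)
    also have "\<dots> = (fps_const (1 + x) * W - 1) $ n"
      by (subst LB) (simp add: W_def field_simps)
    finally show "fps_deriv L $ n = (fps_const (1 + x) * W - 1) $ n" .
  qed
  have F5: "fps_const (1 + x) * V = L + fps_X"
  proof (rule fps_ext)
    fix n show "(fps_const (1 + x) * V) $ n = (L + fps_X) $ n"
    proof (cases n)
      case 0 then show ?thesis by (simp add: V_def L_def lp0)
    next
      case (Suc p)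
      then show ?thesis by (simp add: V_def L_def LB field_simps)
    qed
  qed
  have DU: "fps_deriv U = U + fps_const x"
    unfolding U_def E_def by (simp add: algebra_simps)
  have "fps_deriv (W * (1 - U)) = 0" using F1 by simp
  then have D1: "fps_deriv W * (1 - U) = W * fps_deriv U" by (simp add: algebra_simps)
  have DW: "fps_deriv W = W * fps_deriv U * W"
  proof -
    have "fps_deriv W = fps_deriv W * (W * (1 - U))" using F1 by simp
    also have "\<dots> = (fps_deriv W * (1 - U)) * W" by (simp add: algebra_simps)
    finally show ?thesis using D1 by simp
  qed
  have DL: "fps_deriv L = W * fps_deriv U"
  proof -
    have "fps_deriv L = fps_const (1 + x) * W - W * (1 - U)" using F3 F1 by simp
    also have "\<dots> = W * fps_deriv U" unfolding DU by (simp add: algebra_simps flip: fps_const_add)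
    finally show ?thesis .
  qed
  have DW2: "fps_deriv W = fps_deriv L * W" using DW DL by simp
  have GL: "G = L * W"
  proof -
    have "G = G * (W * (1 - U))" using F1 by simp
    also have "\<dots> = (G * (1 - U)) * W" by (simp only: mult_ac)
    also have "\<dots> = L * W" using F2 by simp
    finally show ?thesis .
  qed
  have "fps_deriv G = fps_deriv W + L * fps_deriv W"
    unfolding GL using DW2 by simp
  also have "L = fps_const (1 + x) * V - fps_X" using F5 by (simp add: algebra_simps)
  finally show ?thesis by (simp add: algebra_simps)
qed

lemma aux_div:
  fixes A B S C F0 s x :: real
  assumes "F0 \<noteq> 0" "s \<noteq> 0" "A / (s * F0) = B / (s * F0) + (1 + x) * (S / (s * F0) + C / F0) - C / F0"
  shows "A = B + (1 + x) * (S + s * C) - s * C"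
proof -
  have "s * F0 * (A / (s * F0)) = s * F0 * (B / (s * F0) + (1 + x) * (S / (s * F0) + C / F0) - C / F0)"
    using assms(3) by simp
  then have "A * (F0 * (F0 * s)) = (B + (1 + x) * (S + s * C) - s * C) * (F0 * (F0 * s))"
    using assms(1,2) by (simp add: field_simps)
  then show ?thesis using assms(1,2) by simp
qed

lemma w0: "geom_poly 0 x = 1" by (simp add: geom_poly_def)

lemma part1:
  fixes x :: real
  shows "harm_geom_poly (m + 1) x =
            geom_poly (m + 1) x + real m * x * geom_poly m x
            + (1 + x) * (\<Sum>k<m - 1. real (m choose k) * geom_poly (m - k - 1) x * geom_poly (k + 1) x)"
proof -
  define W where "W = Abs_fps (\<lambda>n. geom_poly n x / fact n)"
  define G where "G = Abs_fps (\<lambda>n. harm_geom_poly n x / fact n)"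
  define V where "V = Abs_fps (\<lambda>n. if n = 0 then 0 else geom_poly (n - 1) x / fact n)"
  have I: "fps_deriv G = fps_deriv W + fps_const (1 + x) * (fps_deriv W * V) - fps_X * fps_deriv W"
    unfolding W_def G_def V_def by (rule fps_identity)
  have DWn: "fps_deriv W $ k = geom_poly (Suc k) x / fact k" for k
    by (simp add: W_def field_simps del: of_nat_Suc)
  have DGn: "fps_deriv G $ k = harm_geom_poly (Suc k) x / fact k" for k
    by (simp add: G_def field_simps del: of_nat_Suc)
  have E: "fps_deriv G $ m = fps_deriv W $ m + (1 + x) * (fps_deriv W * V) $ m - (fps_X * fps_deriv W) $ m"
    using I by simp
  show ?thesis
  proof (cases m)
    case 0
    then show ?thesis using E by (simp add: DWn DGn V_def W_def G_def)
  next
    case (Suc p)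
    define S where "S = (\<Sum>k<p. real (Suc p choose k) * geom_poly (Suc p - k - 1) x * geom_poly (k+1) x)"
    have c: "(fps_deriv W * V) $ Suc p = S / fact (Suc p) + geom_poly (Suc p) x / fact p"
    proof -
      have "(fps_deriv W * V) $ Suc p = (\<Sum>k\<le>Suc p. fps_deriv W $ k * V $ (Suc p - k))"
        by (simp add: fps_mult_nth atLeast0AtMost)
      also have "\<dots> = (\<Sum>k<p. fps_deriv W $ k * V $ (Suc p - k)) + fps_deriv W $ p * V $ 1"
        by (simp add: V_def lessThan_Suc_atMost[symmetric] Suc_diff_le)
      also have "fps_deriv W $ p * V $ 1 = geom_poly (Suc p) x / fact p"
        unfolding DWn by (simp add: V_def w0)
      also have "(\<Sum>k<p. fps_deriv W $ k * V $ (Suc p - k)) = S / fact (Suc p)"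
        unfolding S_def sum_divide_distrib
      proof (rule sum.cong[OF refl])
        fix k assume "k \<in> {..<p}"
        then have kp: "k < p" by simp
        have e1: "Suc p - k \<noteq> 0" "Suc p - k - 1 = p - k" using kp by auto
        have b: "real (Suc p choose k) = fact (Suc p) / (fact k * fact (Suc p - k))"
          using kp by (intro binomial_fact) simp
        have "fps_deriv W $ k * V $ (Suc p - k) = geom_poly (Suc k) x * geom_poly (p - k) x / (fact k * fact (Suc p - k))"
          unfolding DWn V_def using e1 by (simp del: fact_Suc)
        also have "\<dots> = real (Suc p choose k) * geom_poly (Suc p - k - 1) x * geom_poly (k + 1) x / fact (Suc p)"
          unfolding b e1(2) by (simp del: fact_Suc)
        finally show "fps_deriv W $ k * V $ (Suc p - k) = real (Suc p choose k) * geom_poly (Suc p - k - 1) x * geom_poly (k + 1) x / fact (Suc p)" .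
      qed
      finally show ?thesis by simp
    qed
    have "harm_geom_poly (Suc m) x / fact m = geom_poly (Suc m) x / fact m + (1 + x) * (S / fact (Suc p) + geom_poly (Suc p) x / fact p) - geom_poly m x / fact p"
    proof -
      have X: "(fps_X * fps_deriv W) $ Suc p = fps_deriv W $ p" by (rule fps_X_mult_nth[THEN trans]) simp
      show ?thesis using E unfolding Suc X c DWn DGn .
    qed
    then have "harm_geom_poly (Suc m) x / (real (Suc p) * fact p) = geom_poly (Suc m) x / (real (Suc p) * fact p) + (1 + x) * (S / (real (Suc p) * fact p) + geom_poly m x / fact p) - geom_poly m x / fact p"
      using Suc by (simp only: fact_Suc of_nat_mult mult.commute)
    then have "harm_geom_poly (Suc m) x = geom_poly (Suc m) x + (1 + x) * (S + real (Suc p) * geom_poly m x) - real (Suc p) * geom_poly m x"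
      by (rule aux_div[rotated 2]) auto
    then have "harm_geom_poly (Suc m) x = geom_poly (Suc m) x + (1 + x) * (S + real m * geom_poly m x) - real m * geom_poly m x"
      using Suc by simp
    then show ?thesis using Suc by (simp add: S_def algebra_simps)
  qed
qed

lemma part2:
  fixes x :: real
  assumes "n \<ge> 2" "1 + x \<noteq> 0"
  shows "x / (1 + x) * (\<Sum>k=0..n. real (n choose k) * harm_geom_poly (k + 1) x) =
            harm_geom_poly (n + 1) x - harm_geom_poly n x - geom_poly n x + geom_poly (n - 1) x"
proof -
  obtain q where q: "n = Suc q" "q \<noteq> 0" using assms(1) by (cases n) auto
  define T where "T = (\<Sum>k\<le>n. real (n choose k) * harm_geom_poly (Suc k) x)"
  have P: "(\<Sum>k\<le>Suc n. real (Suc n choose k) * harm_geom_poly k x) =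
     (\<Sum>k\<le>n. real (n choose k) * harm_geom_poly k x) + T"
    unfolding T_def by (rule pascal_sum)
  have "x * T = x * (\<Sum>k\<le>Suc n. real (Suc n choose k) * harm_geom_poly k x) - x * (\<Sum>k\<le>n. real (n choose k) * harm_geom_poly k x)"
    using P by (simp add: algebra_simps)
  also have "\<dots> = (1 + x) * harm_geom_poly (Suc n) x - lp (Suc n) x - ((1 + x) * harm_geom_poly n x - lp n x)"
    by (simp only: LH)
  also have "\<dots> = (1 + x) * (harm_geom_poly (n + 1) x - harm_geom_poly n x - geom_poly n x + geom_poly (n - 1) x)"
    using q by (simp add: LB algebra_simps)
  finally have "x * T = (1 + x) * (harm_geom_poly (n + 1) x - harm_geom_poly n x - geom_poly n x + geom_poly (n - 1) x)" .
  then have "x / (1 + x) * T = harm_geom_poly (n + 1) x - harm_geom_poly n x - geom_poly n x + geom_poly (n - 1) x"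
    using assms(2) by (simp add: field_simps)
  then show ?thesis by (simp add: T_def atLeast0AtMost)
qed

theorem proposition3:
  fixes x :: real
  shows "(\<forall>m::nat. harm_geom_poly (m + 1) x =
            geom_poly (m + 1) x + real m * x * geom_poly m x
            + (1 + x) * (\<Sum>k<m - 1. real (m choose k) * geom_poly (m - k - 1) x * geom_poly (k + 1) x))
     \<and> (\<forall>n::nat. n \<ge> 2 \<longrightarrow> 1 + x \<noteq> 0 \<longrightarrow>
            x / (1 + x) * (\<Sum>k=0..n. real (n choose k) * harm_geom_poly (k + 1) x) =
            harm_geom_poly (n + 1) x - harm_geom_poly n x - geom_poly n x + geom_poly (n - 1) x)"
  using part1 part2 by blast

end
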